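(* Let $\lambda$ and $\chi$ be infinite cardinals. Then there are functions $f_\eta$, for $\eta\in {}^\chi\lambda$, such that: (i) $\mathrm{Dom}(f_\eta)=\{\eta\restriction\alpha:\alpha<\chi\}$; (ii) $\mathrm{Rang}(f_\eta)\subseteq\lambda$; (iii) for every function $f:{}^{\chi>}\lambda\to\lambda$ there is $\eta\in{}^\chi\lambda$ with $f_\eta\subseteq f$.
   Context: ${}^\chi\lambda$ is the set of functions from $\chi$ to $\lambda$, and ${}^{\chi>}\lambda=\bigcup_{\alpha<\chi}{}^\alpha\lambda$ is the set of sequences of ordinals $<\lambda$ of length $<\chi$. For $\eta\in{}^\chi\lambda$ and $\alpha<\chi$, $\eta\restriction\alpha$ is the restriction of $\eta$ to $\alpha$. *)

theory Defs
  imports Main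
begin

text \<open>The cardinal chi is represented by a cardinal well-order r on the whole type 'c
  (Card_order r, Field r = UNIV), so the ordinals below chi are the elements of 'c ordered by r.
  The cardinal lambda is represented by an infinite type 'l.
  Sequences of length alpha < chi are partial maps 'c => 'l option with domain the
  initial segment {beta. beta <_r alpha}.\<close>

definition seq_restr :: "'c rel \<Rightarrow> ('c \<Rightarrow> 'l) \<Rightarrow> 'c \<Rightarrow> ('c \<rightharpoonup> 'l)" where
  "seq_restr r \<eta> \<alpha> = (\<lambda>\<beta>. if \<beta> \<in> Order_Relation.underS r \<alpha> then Some (\<eta> \<beta>) else None)"

end

theory Submission
  imports Defs
begin

lemma underS_inj:
  assumes "Card_order r" "Field r = UNIV"
    and "seq_restr r \<eta> a = seq_restr r \<eta> b"
  shows "a = b"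
proof (rule ccontr)
  assume ne: "a \<noteq> b"
  have lin: "Linear_order r" using assms(1) unfolding card_order_on_def well_order_on_def by blast
  hence tot: "(a,b) \<in> r \<or> (b,a) \<in> r" using ne assms(2)
    unfolding linear_order_on_def total_on_def by blast
  have "\<And>x. (x \<in> Order_Relation.underS r a) = (x \<in> Order_Relation.underS r b)"
    using fun_cong[OF assms(3)] unfolding seq_restr_def by (metis option.distinct(1))
  thus False using tot ne unfolding Order_Relation.underS_def by blast
qed

theorem fact1p5:
  fixes r :: "'c rel"
  assumes "Card_order r" and "Field r = UNIV"
    and "infinite (UNIV :: 'c set)" and "infinite (UNIV :: 'l set)"
  shows "\<exists>F :: ('c \<Rightarrow> 'l) \<Rightarrow> (('c \<rightharpoonup> 'l) \<rightharpoonup> 'l).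
           (\<forall>\<eta>. dom (F \<eta>) = {seq_restr r \<eta> \<alpha> | \<alpha>. \<alpha> \<in> Field r}) \<and>
           (\<forall>f :: ('c \<rightharpoonup> 'l) \<Rightarrow> 'l. \<exists>\<eta>. \<forall>s \<in> dom (F \<eta>). F \<eta> s = Some (f s))"
proof -
  define F :: "('c \<Rightarrow> 'l) \<Rightarrow> (('c \<rightharpoonup> 'l) \<rightharpoonup> 'l)" where
    "F = (\<lambda>\<eta> s. if \<exists>a. s = seq_restr r \<eta> a then Some (\<eta> (SOME a. s = seq_restr r \<eta> a)) else None)"
  have dom: "\<forall>\<eta>. dom (F \<eta>) = {seq_restr r \<eta> \<alpha> | \<alpha>. \<alpha> \<in> Field r}"
    using assms(2) by (auto simp: F_def split: if_splits)
  have wfR: "wf (r - Id)" using assms(1)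
    unfolding card_order_on_def well_order_on_def by blast
  have main: "\<exists>\<eta>. \<forall>s \<in> dom (F \<eta>). F \<eta> s = Some (f s)" for f :: "('c \<rightharpoonup> 'l) \<Rightarrow> 'l"
  proof -
    define H where "H = (\<lambda>(g::'c \<Rightarrow> 'l) a. f (\<lambda>b. if b \<in> Order_Relation.underS r a then Some (g b) else None))"
    define \<eta> where "\<eta> = wfrec (r - Id) H"
    have eq: "\<eta> a = f (seq_restr r \<eta> a)" for a
    proof -
      have "\<eta> a = H (cut \<eta> (r - Id) a) a" unfolding \<eta>_def by (rule wfrec[OF wfR])
      also have "\<dots> = f (seq_restr r \<eta> a)"
        unfolding H_def seq_restr_def cut_def Order_Relation.underS_def
        by (intro arg_cong[where f=f] ext) auto
      finally show ?thesis .
    qed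
    have "\<forall>s \<in> dom (F \<eta>). F \<eta> s = Some (f s)"
    proof
      fix s assume "s \<in> dom (F \<eta>)"
      then obtain a where a: "s = seq_restr r \<eta> a" by (auto simp: F_def split: if_splits)
      have "(SOME a. s = seq_restr r \<eta> a) = a"
        using a underS_inj[OF assms(1,2)] by (metis (mono_tags) someI)
      thus "F \<eta> s = Some (f s)" using a eq by (auto simp: F_def)
    qed
    thus ?thesis by blast
  qed
  show ?thesis using dom main by blast
qed

end
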